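(* Let $G$ be an abelian group of odd order and suppose there exists a Heffter space over $G$ with $r$ parallel classes which is a linear space. Then for every $g\in G$, the order of $g$ divides $r-1$.
   Context: A half-set of an abelian group $G$ of odd order $2v+1\ge7$ is a subset $V\subseteq G\setminus\{0\}$ containing exactly one element of each pair $\{g,-g\}$, $g\ne0$. A Heffter system on $V$ with block size $k$ is a partition of $V$ into blocks of size $k$, each summing to $0$ in $G$. A Heffter space over $G$ is a partial linear space (any two distinct points in at most one block) with point set a half-set $V$ of $G$, together with a resolution (partition of its blocks into parallel classes, each partitioning $V$) in which every parallel class is a Heffter system on $V$. It is a linear space if any two distinct points lie in exactly one block. Its degree is the number of parallel classes. *)

theory Defs
  imports Main "HOL-Library.Disjoint_Sets"
begin

text \<open>The abelian group G is modelled as a finite type of class ab_group_add.\<close>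

definition add_order :: "'a::ab_group_add \<Rightarrow> nat" where
  "add_order g = (LEAST n. 0 < n \<and> (\<Sum>i<n. g) = 0)"

definition half_set :: "'a::ab_group_add set \<Rightarrow> bool" where
  "half_set V \<longleftrightarrow> V \<subseteq> UNIV - {0} \<and> (\<forall>g. g \<noteq> 0 \<longrightarrow> (g \<in> V \<longleftrightarrow> - g \<notin> V))"

definition heffter_system :: "'a::ab_group_add set \<Rightarrow> nat \<Rightarrow> 'a set set \<Rightarrow> bool" where
  "heffter_system V k P \<longleftrightarrow> partition_on V P \<and> (\<forall>B\<in>P. card B = k \<and> sum id B = 0)"

text \<open>Heffter space over G with point set V, block size k, given by its resolution R
  (a set of parallel classes; the blocks are the union of the classes).\<close>
definition heffter_space :: "'a::ab_group_add set \<Rightarrow> nat \<Rightarrow> 'a set set set \<Rightarrow> bool" where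
  "heffter_space V k R \<longleftrightarrow>
     half_set V \<and>
     disjoint R \<and>
     (\<forall>P\<in>R. heffter_system V k P) \<and>
     (\<forall>x y. x \<noteq> y \<longrightarrow> card {B \<in> \<Union>R. x \<in> B \<and> y \<in> B} \<le> 1)"

definition is_linear_space :: "'a set \<Rightarrow> 'a set set \<Rightarrow> bool" where
  "is_linear_space V Bs \<longleftrightarrow> (\<forall>x\<in>V. \<forall>y\<in>V. x \<noteq> y \<longrightarrow> (\<exists>!B. B \<in> Bs \<and> x \<in> B \<and> y \<in> B))"

end

theory Submission
  imports Defs
begin

lemma rep_add: "(\<Sum>i<(a::nat)+b. (g::'a::ab_group_add)) = (\<Sum>i<a. g) + (\<Sum>i<b. g)"
  by (induction b) (simp_all add: add_ac)

lemma rep_mult: "(\<Sum>i<m. (g::'a::ab_group_add)) = 0 \<Longrightarrow> (\<Sum>i<(q::nat)*m. g) = 0"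
  by (induction q) (simp_all add: rep_add)

lemma order_dvd:
  fixes g :: "'a::ab_group_add"
  assumes "(\<Sum>i<n. g) = 0"
  shows "add_order g dvd n"
proof (cases "n = 0")
  case True then show ?thesis by simp
next
  case False
  let ?P = "\<lambda>n. 0 < n \<and> (\<Sum>i<n. g) = 0"
  have Pn: "?P n" using False assms by simp
  have Pm: "?P (add_order g)" unfolding add_order_def by (rule LeastI[of ?P n, OF Pn])
  have least: "\<And>j. ?P j \<Longrightarrow> add_order g \<le> j" unfolding add_order_def by (rule Least_le)
  define m where "m = add_order g"
  have m0: "0 < m" and mz: "(\<Sum>i<m. g) = 0" using Pm m_def by auto
  have "n = (n div m) * m + n mod m" by simp
  then have "(\<Sum>i<n. g) = (\<Sum>i<(n div m)*m. g) + (\<Sum>i<n mod m. g)"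
    by (metis rep_add)
  then have "(\<Sum>i<n mod m. g) = 0" using assms rep_mult[OF mz] by simp
  moreover have "n mod m < m" using m0 by simp
  ultimately have "n mod m = 0" using least[of "n mod m"] m_def by (metis leD neq0_conv)
  then show ?thesis using m_def by auto
qed

lemma sum_const_rep: "finite A \<Longrightarrow> (\<Sum>a\<in>A. (c::'a::ab_group_add)) = (\<Sum>i<card A. c)"
  by (induction A rule: finite_induct) (simp_all add: add_ac)

theorem proposition2p1:
  fixes V :: "'a::{ab_group_add, finite} set"
    and R :: "'a set set set"
    and k :: nat
  assumes "odd (card (UNIV :: 'a set))"
    and "card (UNIV :: 'a set) \<ge> 7"
    and "heffter_space V k R"
    and "is_linear_space V (\<Union>R)"
  shows "\<forall>g::'a. add_order g dvd (card R - 1)"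
proof (cases "R = {}")
  case True then show ?thesis by simp
next
  case False
  then obtain P0 where P0: "P0 \<in> R" by blast
  have hs: "half_set V" and dR: "disjoint R" and hsys: "\<And>P. P \<in> R \<Longrightarrow> heffter_system V k P"
    using assms(3) unfolding heffter_space_def by auto
  have lin: "\<And>x y. x \<in> V \<Longrightarrow> y \<in> V \<Longrightarrow> x \<noteq> y \<Longrightarrow> \<exists>!B. B \<in> \<Union>R \<and> x \<in> B \<and> y \<in> B"
    using assms(4) unfolding is_linear_space_def by blast
  have lin_ex: "\<And>x y. x \<in> V \<Longrightarrow> y \<in> V \<Longrightarrow> x \<noteq> y \<Longrightarrow> \<exists>B. B \<in> \<Union>R \<and> x \<in> B \<and> y \<in> B"
    using lin by (metis (no_types, lifting))
  have lin_un: "\<And>x y B B'. x \<in> V \<Longrightarrow> y \<in> V \<Longrightarrow> x \<noteq> y \<Longrightarrow> B \<in> \<Union>R \<Longrightarrow> x \<in> B \<Longrightarrow> y \<in> B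
     \<Longrightarrow> B' \<in> \<Union>R \<Longrightarrow> x \<in> B' \<Longrightarrow> y \<in> B' \<Longrightarrow> B = B'"
  proof -
    fix x y B B' assume h: "x \<in> V" "y \<in> V" "x \<noteq> y" "B \<in> \<Union>R" "x \<in> B" "y \<in> B" "B' \<in> \<Union>R" "x \<in> B'" "y \<in> B'"
    from lin[OF h(1-3)] obtain C where "\<forall>D. D \<in> \<Union>R \<and> x \<in> D \<and> y \<in> D \<longrightarrow> D = C" by (elim ex1E) blast
    then show "B = B'" using h by metis
  qed
  have part: "\<And>P. P \<in> R \<Longrightarrow> partition_on V P" and bz: "\<And>P B. P \<in> R \<Longrightarrow> B \<in> P \<Longrightarrow> sum id B = 0"
    using hsys unfolding heffter_system_def by auto
  have sumV: "sum id V = 0"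
  proof -
    have pv: "partition_on V P0" using part P0 .
    then have "V = \<Union>P0" unfolding partition_on_def by auto
    then have "sum id V = sum (sum id) P0"
      using pv sum.Union_disjoint[of P0 id] unfolding partition_on_def disjoint_def by auto
    also have "\<dots> = 0" using bz[OF P0] by simp
    finally show ?thesis .
  qed
  have key: "(\<Sum>i<card R - 1. x) = 0" if xV: "x \<in> V" for x
  proof -
    define Bx where "Bx = {B \<in> \<Union>R. x \<in> B}"
    have sub: "\<And>B. B \<in> Bx \<Longrightarrow> B \<subseteq> V"
      using part unfolding Bx_def partition_on_def by auto
    have s1: "sum (sum id) Bx = 0" unfolding Bx_def by (rule sum.neutral) (use bz in blast)
    have s2: "sum (sum id) Bx = sum (\<lambda>B. x) Bx + sum (\<lambda>B. sum id (B - {x})) Bx"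
      unfolding sum.distrib[symmetric]
      by (rule sum.cong) (auto simp: Bx_def sum.remove[of _ x])
    have un: "(\<Union>B\<in>Bx. B - {x}) = V - {x}"
    proof
      show "(\<Union>B\<in>Bx. B - {x}) \<subseteq> V - {x}" using sub by auto
      show "V - {x} \<subseteq> (\<Union>B\<in>Bx. B - {x})"
      proof
        fix y assume "y \<in> V - {x}"
        then have "\<exists>B. B \<in> \<Union>R \<and> x \<in> B \<and> y \<in> B" using lin_ex[OF xV, of y] by auto
        then obtain B where "B \<in> \<Union>R" "x \<in> B" "y \<in> B" by blast
        then show "y \<in> (\<Union>B\<in>Bx. B - {x})" using \<open>y \<in> V - {x}\<close> unfolding Bx_def by auto
      qed
    qed
    have s3: "sum (\<lambda>B. sum id (B - {x})) Bx = sum id (V - {x})"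
    proof -
      have "sum id (\<Union>B\<in>Bx. B - {x}) = sum (\<lambda>B. sum id (B - {x})) Bx"
      proof (rule sum.UNION_disjoint)
        show "finite Bx" by simp
        show "\<forall>i\<in>Bx. finite (i - {x})" by simp
        show "\<forall>i\<in>Bx. \<forall>j\<in>Bx. i \<noteq> j \<longrightarrow> (i - {x}) \<inter> (j - {x}) = {}"
        proof (intro ballI impI)
          fix i j assume ij: "i \<in> Bx" "j \<in> Bx" "i \<noteq> j"
          show "(i - {x}) \<inter> (j - {x}) = {}"
          proof (rule ccontr)
            assume "(i - {x}) \<inter> (j - {x}) \<noteq> {}"
            then obtain y where y: "y \<in> i" "y \<in> j" "y \<noteq> x" by auto
            have "y \<in> V" using sub ij y by auto
            have "i \<in> \<Union>R" "j \<in> \<Union>R" "x \<in> i" "x \<in> j" using ij unfolding Bx_def by auto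
            then show False using lin_un[OF xV \<open>y \<in> V\<close> \<open>y \<noteq> x\<close>[symmetric]] y ij(3) by metis
          qed
        qed
      qed
      then show ?thesis using un by simp
    qed
    have s4: "sum (\<lambda>B. x) Bx = sum (\<lambda>P. x) R"
    proof -
      have sing: "\<exists>B0. {B \<in> P. x \<in> B} = {B0}" if PR: "P \<in> R" for P
      proof -
        have pp: "partition_on V P" using part PR .
        then obtain B0 where B0: "B0 \<in> P" "x \<in> B0" using xV unfolding partition_on_def by auto
        have "\<And>B. B \<in> P \<Longrightarrow> x \<in> B \<Longrightarrow> B = B0"
          using pp B0 unfolding partition_on_def disjoint_def by auto
        then show ?thesis using B0 by blast
      qed
      have "Bx = (\<Union>P\<in>R. {B \<in> P. x \<in> B})" unfolding Bx_def by auto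
      moreover have "sum (\<lambda>B. x) (\<Union>P\<in>R. {B \<in> P. x \<in> B}) = sum (\<lambda>P. sum (\<lambda>B. x) {B \<in> P. x \<in> B}) R"
      proof (rule sum.UNION_disjoint)
        show "\<forall>i\<in>R. \<forall>j\<in>R. i \<noteq> j \<longrightarrow> {B \<in> i. x \<in> B} \<inter> {B \<in> j. x \<in> B} = {}"
          using dR unfolding disjoint_def by blast
      qed simp_all
      ultimately have "sum (\<lambda>B. x) Bx = sum (\<lambda>P. sum (\<lambda>B. x) {B \<in> P. x \<in> B}) R" by simp
      also have "\<dots> = sum (\<lambda>P. x) R"
      proof (rule sum.cong)
        fix P assume "P \<in> R"
        then obtain B0 where "{B \<in> P. x \<in> B} = {B0}" using sing by blast
        then show "sum (\<lambda>B. x) {B \<in> P. x \<in> B} = x" by simp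
      qed simp
      finally show ?thesis .
    qed
    have "sum id V = x + sum id (V - {x})" using xV by (simp add: sum.remove)
    then have "sum id (V - {x}) = - x" using sumV by (simp add: eq_neg_iff_add_eq_0 add.commute)
    moreover have "sum (\<lambda>P. x) R + sum id (V - {x}) = 0" using s1 s2 s3 s4 by metis
    ultimately have "sum (\<lambda>P. x) R + - x = 0" by metis
    then have "sum (\<lambda>P. x) R = x" by (metis diff_conv_add_uminus right_minus_eq)
    then have "(\<Sum>i<card R. x) = x" using sum_const_rep[of R x] by simp
    moreover have "card R = Suc (card R - 1)" using False by (simp add: card_gt_0_iff)
    ultimately show ?thesis by (metis sum.lessThan_Suc add_cancel_left_left)
  qed
  show ?thesis
  proof
    fix g :: 'a
    have "(\<Sum>i<card R - 1. g) = 0"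
    proof (cases "g = 0")
      case True then show ?thesis by simp
    next
      case False
      then have "g \<in> V \<or> - g \<in> V" using hs unfolding half_set_def by blast
      then show ?thesis
      proof
        assume "- g \<in> V"
        then have "(\<Sum>i<card R - 1. - g) = 0" by (rule key)
        then show ?thesis by (simp add: sum_negf)
      qed (rule key)
    qed
    then show "add_order g dvd (card R - 1)" by (rule order_dvd)
  qed
qed

end
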